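(* Let $g$ be any classifier (possibly depending on the data) and $\hat\eta$ an estimator of $\eta$ constructed on $\mathcal{D}_n$, and suppose $\mathbb{E}_{X\mid S=s}[\hat\eta(X,s)]>0$ and $\hat{\mathbb{E}}_{X\mid S=s}[\hat\eta(X,s)]>0$ for $s\in\{0,1\}$. Then almost surely $$\Delta(g,\mathbb{P})\le \hat\Delta(g,\mathbb{P})+\sum_{s\in\{0,1\}}\Bigg(2\frac{\mathbb{E}_{X\mid S=s}|\eta(X,s)-\hat\eta(X,s)|}{\mathbb{P}(Y=1\mid S=s)}+\frac{\big|(\mathbb{E}_{X\mid S=s}-\hat{\mathbb{E}}_{X\mid S=s})[\hat\eta(X,s)g(X,s)]\big|}{\mathbb{E}_{X\mid S=s}[\hat\eta(X,s)]}+\frac{\big|(\hat{\mathbb{E}}_{X\mid S=s}-\mathbb{E}_{X\mid S=s})[\hat\eta(X,s)]\big|}{\mathbb{E}_{X\mid S=s}[\hat\eta(X,s)]}\Bigg).$$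
   Context: Let $(X,S,Y)$ be a random tuple in $\mathbb{R}^d\times\{0,1\}\times\{0,1\}$ with joint distribution $\mathbb{P}$, where $\mathbb{P}(S=1)\in(0,1)$ and $\mathbb{P}(Y=1\mid S=s)>0$ for $s\in\{0,1\}$. A classifier is a measurable map $g:\mathbb{R}^d\times\{0,1\}\to\{0,1\}$. The regression function is $\eta(x,s)=\mathbb{P}(Y=1\mid X=x,S=s)$; $\mathbb{E}_{X\mid S=s}$ is expectation w.r.t. the conditional law of $X$ given $S=s$ (over a fresh independent $X$, with data held fixed). Unfairness: $\Delta(g,\mathbb{P})=|\mathbb{P}(g(X,S)=1\mid S=1,Y=1)-\mathbb{P}(g(X,S)=1\mid S=0,Y=1)|$. Data: labeled $\mathcal{D}_n$ i.i.d. from $\mathbb{P}$ and independent unlabeled $\mathcal{D}_N=\{(X_i,S_i)\}$ i.i.d. from the law of $(X,S)$, containing points of both groups; $\hat\eta:\mathbb{R}^d\times\{0,1\}\to[0,1]$ is built from $\mathcal{D}_n$ only; $\hat{\mathbb{E}}_{X\mid S=s}$ is expectation w.r.t. the empirical distribution of $\{X:(X,S)\in\mathcal{D}_N,S=s\}$. Empirical unfairness: $$\hat\Delta(g,\mathbb{P})=\Big|\frac{\hat{\mathbb{E}}_{X\mid S=1}[\hat\eta(X,1)g(X,1)]}{\hat{\mathbb{E}}_{X\mid S=1}[\hat\eta(X,1)]}-\frac{\hat{\mathbb{E}}_{X\mid S=0}[\hat\eta(X,0)g(X,0)]}{\hat{\mathbb{E}}_{X\mid S=0}[\hat\eta(X,0)]}\Big|.$$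 *)

theory Defs
  imports "HOL-Probability.Probability"
begin

text \<open>Outcomes are triples (X, S, Y) with X in the feature space, S the sensitive
  attribute (True = 1) and Y the label (True = 1).\<close>

definition cprob :: "('x \<times> bool \<times> bool) measure \<Rightarrow> (('x \<times> bool \<times> bool) \<Rightarrow> bool)
    \<Rightarrow> (('x \<times> bool \<times> bool) \<Rightarrow> bool) \<Rightarrow> real" where
  "cprob M A B = measure M {\<omega> \<in> space M. A \<omega> \<and> B \<omega>} / measure M {\<omega> \<in> space M. B \<omega>}"

definition cond_exp_S :: "('x \<times> bool \<times> bool) measure \<Rightarrow> bool \<Rightarrow> ('x \<Rightarrow> real) \<Rightarrow> real" where
  "cond_exp_S M s f =
     (\<integral>\<omega>. (if fst (snd \<omega>) = s then f (fst \<omega>) else 0) \<partial>M)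
       / measure M {\<omega> \<in> space M. fst (snd \<omega>) = s}"

text \<open>\<eta> is (a version of) the regression function P(Y=1 | X=x, S=s).\<close>
definition regression_function :: "('x::topological_space \<times> bool \<times> bool) measure
    \<Rightarrow> ('x \<Rightarrow> bool \<Rightarrow> real) \<Rightarrow> bool" where
  "regression_function M \<eta> \<longleftrightarrow>
     (\<forall>s. (\<lambda>x. \<eta> x s) \<in> borel_measurable borel) \<and>
     integrable M (\<lambda>\<omega>. \<eta> (fst \<omega>) (fst (snd \<omega>))) \<and>
     (\<forall>A \<in> sets borel. \<forall>s.
        (\<integral>\<omega>. (if fst \<omega> \<in> A \<and> fst (snd \<omega>) = s \<and> snd (snd \<omega>) then 1 else 0) \<partial>M)
      = (\<integral>\<omega>. (if fst \<omega> \<in> A \<and> fst (snd \<omega>) = s then \<eta> (fst \<omega>) (fst (snd \<omega>)) else 0) \<partial>M))"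

definition unfairness :: "('x \<times> bool \<times> bool) measure \<Rightarrow> ('x \<Rightarrow> bool \<Rightarrow> bool) \<Rightarrow> real" where
  "unfairness M g =
     \<bar>cprob M (\<lambda>\<omega>. g (fst \<omega>) (fst (snd \<omega>))) (\<lambda>\<omega>. fst (snd \<omega>) \<and> snd (snd \<omega>))
      - cprob M (\<lambda>\<omega>. g (fst \<omega>) (fst (snd \<omega>))) (\<lambda>\<omega>. \<not> fst (snd \<omega>) \<and> snd (snd \<omega>))\<bar>"

definition emp_exp :: "('x \<times> bool) list \<Rightarrow> bool \<Rightarrow> ('x \<Rightarrow> real) \<Rightarrow> real" where
  "emp_exp DN s f =
     (\<Sum>p\<leftarrow>filter (\<lambda>p. snd p = s) DN. f (fst p)) / real (length (filter (\<lambda>p. snd p = s) DN))"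

definition emp_unfairness :: "('x \<times> bool) list \<Rightarrow> ('x \<Rightarrow> bool \<Rightarrow> real) \<Rightarrow> ('x \<Rightarrow> bool \<Rightarrow> bool) \<Rightarrow> real" where
  "emp_unfairness DN \<eta>h g =
     \<bar>emp_exp DN True (\<lambda>x. \<eta>h x True * of_bool (g x True)) / emp_exp DN True (\<lambda>x. \<eta>h x True)
      - emp_exp DN False (\<lambda>x. \<eta>h x False * of_bool (g x False)) / emp_exp DN False (\<lambda>x. \<eta>h x False)\<bar>"

end

theory Submission imports Defs begin
lemma m2: "{\<omega>::('a::topological_space \<times> bool \<times> bool). P (fst (snd \<omega>)) (snd (snd \<omega>))} \<in> sets borel"
proof -
  have "open {p::bool\<times>bool. P (fst p) (snd p)}"
  proof -
    have "closed (- {p::bool\<times>bool. P (fst p) (snd p)})" by (rule finite_imp_closed) simp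
    then show ?thesis by (simp add: closed_def)
  qed
  then have "open (UNIV \<times> {p::bool\<times>bool. P (fst p) (snd p)} :: ('a \<times> bool \<times> bool) set)"
    by (intro open_Times) auto
  moreover have "UNIV \<times> {p::bool\<times>bool. P (fst p) (snd p)} = {\<omega>::('a \<times> bool \<times> bool). P (fst (snd \<omega>)) (snd (snd \<omega>))}" by auto
  ultimately show ?thesis by auto
qed

lemma m3:
  fixes M :: "('a::second_countable_topology \<times> bool \<times> bool) measure"
  assumes "sets M = sets borel" and h: "h \<in> borel_measurable borel"
  shows "(\<lambda>\<omega>. if fst (snd \<omega>) = s then h (fst \<omega>) else (0::real)) \<in> borel_measurable M"
proof -
  have f: "(\<lambda>\<omega>::('a \<times> bool \<times> bool). fst \<omega>) \<in> borel_measurable borel"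
    by (intro borel_measurable_continuous_onI continuous_intros)
  have mm: "(\<lambda>\<omega>::('a \<times> bool \<times> bool). indicator {\<omega>. fst (snd \<omega>) = s} \<omega> * h (fst \<omega>)) \<in> borel_measurable borel"
    apply (intro borel_measurable_times borel_measurable_indicator m2)
    using measurable_compose[OF f h] by (simp add: o_def)
  then have "(\<lambda>\<omega>::('a \<times> bool \<times> bool). if fst (snd \<omega>) = s then h (fst \<omega>) else 0) \<in> borel_measurable borel"
  proof -
    have "(\<lambda>\<omega>::('a \<times> bool \<times> bool). indicator {\<omega>. fst (snd \<omega>) = s} \<omega> * h (fst \<omega>)) = (\<lambda>\<omega>. if fst (snd \<omega>) = s then h (fst \<omega>) else 0)"
      by (auto simp: fun_eq_iff indicator_def)
    then show ?thesis using mm by simp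
  qed
  then show ?thesis by (subst measurable_cong_sets[OF assms(1) refl])
qed

lemma m4:
  fixes M :: "('a::second_countable_topology \<times> bool \<times> bool) measure"
  assumes "sets M = sets borel" and h: "\<forall>s. (\<lambda>x. h x s) \<in> borel_measurable borel"
  shows "(\<lambda>\<omega>. h (fst \<omega>) (fst (snd \<omega>)) :: real) \<in> borel_measurable M"
proof -
  have e: "(\<lambda>\<omega>. h (fst \<omega>) (fst (snd \<omega>))) = (\<lambda>\<omega>. (if fst (snd \<omega>) = True then h (fst \<omega>) True else 0) + (if fst (snd \<omega>) = False then h (fst \<omega>) False else 0))"
    by (auto simp: fun_eq_iff)
  show ?thesis unfolding e
    by (intro borel_measurable_add m3[OF assms(1)]) (use h in auto)
qed

lemma absb:
  fixes f g :: "'a \<Rightarrow> real"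
  assumes "integrable M f" "integrable M g" "\<And>x. x \<in> space M \<Longrightarrow> \<bar>f x\<bar> \<le> g x"
  shows "\<bar>\<integral>x. f x \<partial>M\<bar> \<le> (\<integral>x. g x \<partial>M)"
proof -
  have "\<bar>\<integral>x. f x \<partial>M\<bar> \<le> (\<integral>x. \<bar>f x\<bar> \<partial>M)" using integral_norm_bound[of M f] by simp
  also have "\<dots> \<le> (\<integral>x. g x \<partial>M)" using assms by (intro integral_mono) auto
  finally show ?thesis .
qed

lemma alg:
  fixes A En B D Bh Dh e :: real
  assumes "En > 0" "D > 0" "Dh > 0" "0 \<le> B" "B \<le> D" "0 \<le> Bh" "Bh \<le> Dh"
    "\<bar>A - B\<bar> \<le> e" "\<bar>En - D\<bar> \<le> e"
  shows "\<bar>A/En - Bh/Dh\<bar> \<le> 2*e/En + \<bar>B - Bh\<bar>/D + \<bar>Dh - D\<bar>/D"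
proof -
  have r1: "B/D \<le> 1" "0 \<le> B/D" "Bh/Dh \<le> 1" "0 \<le> Bh/Dh" using assms by auto
  have e1: "A/En - B/D = (A-B)/En + (B/D)*(D-En)/En" using assms by (simp add: field_simps)
  have "\<bar>(B/D)*(D-En)/En\<bar> = (B/D)*\<bar>D-En\<bar>/En" using assms r1 by (simp add: abs_mult)
  also have "\<dots> \<le> 1*\<bar>D-En\<bar>/En" using r1 assms
    by (intro divide_right_mono mult_right_mono) auto
  also have "\<dots> \<le> e/En" using assms by (simp add: abs_minus_commute divide_right_mono)
  finally have t2: "\<bar>(B/D)*(D-En)/En\<bar> \<le> e/En" .
  have t1: "\<bar>(A-B)/En\<bar> \<le> e/En" using assms by (simp add: divide_right_mono)
  have p1: "\<bar>A/En - B/D\<bar> \<le> 2*e/En" unfolding e1 using t1 t2 abs_triangle_ineq[of "(A-B)/En" "(B/D)*(D-En)/En"] by linarith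
  have e2: "B/D - Bh/Dh = (B-Bh)/D + (Bh/Dh)*(Dh-D)/D" using assms by (simp add: field_simps)
  have "\<bar>(Bh/Dh)*(Dh-D)/D\<bar> = (Bh/Dh)*\<bar>Dh-D\<bar>/D" using assms r1 by (simp add: abs_mult)
  also have "\<dots> \<le> 1*\<bar>Dh-D\<bar>/D" using r1 assms
    by (intro divide_right_mono mult_right_mono) auto
  finally have t3: "\<bar>(Bh/Dh)*(Dh-D)/D\<bar> \<le> \<bar>Dh-D\<bar>/D" by simp
  have p2: "\<bar>B/D - Bh/Dh\<bar> \<le> \<bar>B - Bh\<bar>/D + \<bar>Dh - D\<bar>/D" unfolding e2
  proof -
    have "\<bar>(B-Bh)/D\<bar> = \<bar>B - Bh\<bar>/D" using assms by simp
    then show "\<bar>(B-Bh)/D + (Bh/Dh)*(Dh-D)/D\<bar> \<le> \<bar>B - Bh\<bar>/D + \<bar>Dh - D\<bar>/D"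
      using t3 abs_triangle_ineq[of "(B-Bh)/D" "(Bh/Dh)*(Dh-D)/D"] by linarith
  qed
  show ?thesis using p1 p2 by linarith
qed

lemma emp_bounds:
  assumes "\<forall>x s. 0 \<le> \<eta>h x s \<and> \<eta>h x s \<le> 1"
  shows "0 \<le> emp_exp DN s (\<lambda>x. \<eta>h x s * of_bool (g x s))"
    "emp_exp DN s (\<lambda>x. \<eta>h x s * of_bool (g x s)) \<le> emp_exp DN s (\<lambda>x. \<eta>h x s)"
  unfolding emp_exp_def using assms
  by (auto intro!: divide_nonneg_nonneg divide_right_mono sum_list_nonneg sum_list_mono)

theorem mainTheorem4:
  fixes M :: "((real ^ ('d::finite)) \<times> bool \<times> bool) measure"
    and \<eta> \<eta>h :: "(real ^ ('d::finite)) \<Rightarrow> bool \<Rightarrow> real"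
    and g :: "(real ^ ('d::finite)) \<Rightarrow> bool \<Rightarrow> bool"
    and DN :: "((real ^ ('d::finite)) \<times> bool) list"
  assumes "prob_space M"
    and "sets M = sets borel"
    and "0 < measure M {\<omega> \<in> space M. fst (snd \<omega>)}"
    and "measure M {\<omega> \<in> space M. fst (snd \<omega>)} < 1"
    and "\<forall>s. cprob M (\<lambda>\<omega>. snd (snd \<omega>)) (\<lambda>\<omega>. fst (snd \<omega>) = s) > 0"
    and "regression_function M \<eta>"
    and "\<forall>s. (\<lambda>x. \<eta>h x s) \<in> borel_measurable borel"
    and "\<forall>x s. 0 \<le> \<eta>h x s \<and> \<eta>h x s \<le> 1"
    and "\<forall>s. {x. g x s} \<in> sets borel"
    and "\<forall>s. \<exists>p \<in> set DN. snd p = s"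
    and "\<forall>s. cond_exp_S M s (\<lambda>x. \<eta>h x s) > 0"
    and "\<forall>s. emp_exp DN s (\<lambda>x. \<eta>h x s) > 0"
  shows "unfairness M g \<le> emp_unfairness DN \<eta>h g +
     (\<Sum>s\<in>UNIV.
        2 * cond_exp_S M s (\<lambda>x. \<bar>\<eta> x s - \<eta>h x s\<bar>)
          / cprob M (\<lambda>\<omega>. snd (snd \<omega>)) (\<lambda>\<omega>. fst (snd \<omega>) = s)
      + \<bar>cond_exp_S M s (\<lambda>x. \<eta>h x s * of_bool (g x s))
          - emp_exp DN s (\<lambda>x. \<eta>h x s * of_bool (g x s))\<bar>
          / cond_exp_S M s (\<lambda>x. \<eta>h x s)
      + \<bar>emp_exp DN s (\<lambda>x. \<eta>h x s) - cond_exp_S M s (\<lambda>x. \<eta>h x s)\<bar>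
          / cond_exp_S M s (\<lambda>x. \<eta>h x s))"
proof -
  interpret P: prob_space M by fact
  note sM = assms(2)
  have reg: "\<forall>s. (\<lambda>x. \<eta> x s) \<in> borel_measurable borel"
    "integrable M (\<lambda>\<omega>. \<eta> (fst \<omega>) (fst (snd \<omega>)))"
    "\<And>A s. A \<in> sets borel \<Longrightarrow>
        (\<integral>\<omega>. (if fst \<omega> \<in> A \<and> fst (snd \<omega>) = s \<and> snd (snd \<omega>) then 1 else 0) \<partial>M)
      = (\<integral>\<omega>. (if fst \<omega> \<in> A \<and> fst (snd \<omega>) = s then \<eta> (fst \<omega>) (fst (snd \<omega>)) else 0) \<partial>M)"
    using assms(6) unfolding regression_function_def by auto
  define I :: "bool \<Rightarrow> ((real ^ 'd) \<Rightarrow> real) \<Rightarrow> real" where "I s f = (\<integral>\<omega>. (if fst (snd \<omega>) = s then f (fst \<omega>) else 0) \<partial>M)" for s f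
  define p where "p s = measure M {\<omega> \<in> space M. fst (snd \<omega>) = s}" for s
  have ce: "cond_exp_S M s f = I s f / p s" for s f unfolding cond_exp_S_def I_def p_def by simp
  have regA: "measure M {\<omega> \<in> space M. fst \<omega> \<in> A \<and> fst (snd \<omega>) = s \<and> snd (snd \<omega>)}
      = I s (\<lambda>x. \<eta> x s * of_bool (x \<in> A))" if A: "A \<in> sets borel" for A s
  proof -
    have "measure M {\<omega> \<in> space M. fst \<omega> \<in> A \<and> fst (snd \<omega>) = s \<and> snd (snd \<omega>)}
       = (\<integral>\<omega>. indicator {\<omega>. fst \<omega> \<in> A \<and> fst (snd \<omega>) = s \<and> snd (snd \<omega>)} \<omega> \<partial>M)"
      by (simp add: Int_def conj_commute)
    also have "\<dots> = (\<integral>\<omega>. (if fst \<omega> \<in> A \<and> fst (snd \<omega>) = s \<and> snd (snd \<omega>) then 1 else 0) \<partial>M)"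
      by (intro Bochner_Integration.integral_cong) (auto simp: indicator_def)
    also have "\<dots> = (\<integral>\<omega>. (if fst \<omega> \<in> A \<and> fst (snd \<omega>) = s then \<eta> (fst \<omega>) (fst (snd \<omega>)) else 0) \<partial>M)"
      using reg(3)[OF A] by simp
    also have "\<dots> = I s (\<lambda>x. \<eta> x s * of_bool (x \<in> A))"
      unfolding I_def by (intro Bochner_Integration.integral_cong) auto
    finally show ?thesis .
  qed
  have ps: "p s > 0" for s
  proof -
    have "p s \<noteq> 0" using spec[OF assms(5), of s] unfolding cprob_def p_def by auto
    then show ?thesis unfolding p_def by (simp add: less_le)
  qed
  have pi: "cprob M (\<lambda>\<omega>. snd (snd \<omega>)) (\<lambda>\<omega>. fst (snd \<omega>) = s) = cond_exp_S M s (\<lambda>x. \<eta> x s)" for s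
  proof -
    have "{\<omega> \<in> space M. snd (snd \<omega>) \<and> fst (snd \<omega>) = s} = {\<omega> \<in> space M. fst \<omega> \<in> UNIV \<and> fst (snd \<omega>) = s \<and> snd (snd \<omega>)}"
      by auto
    then show ?thesis unfolding cprob_def ce p_def[symmetric] using regA[of UNIV s] by simp
  qed
  have cg: "cprob M (\<lambda>\<omega>. g (fst \<omega>) (fst (snd \<omega>))) (\<lambda>\<omega>. fst (snd \<omega>) = s \<and> snd (snd \<omega>))
      = cond_exp_S M s (\<lambda>x. \<eta> x s * of_bool (g x s)) / cond_exp_S M s (\<lambda>x. \<eta> x s)" for s
  proof -
    have "{\<omega> \<in> space M. g (fst \<omega>) (fst (snd \<omega>)) \<and> fst (snd \<omega>) = s \<and> snd (snd \<omega>)} = {\<omega> \<in> space M. fst \<omega> \<in> {x. g x s} \<and> fst (snd \<omega>) = s \<and> snd (snd \<omega>)}"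
      by auto
    moreover have "{\<omega> \<in> space M. fst (snd \<omega>) = s \<and> snd (snd \<omega>)} = {\<omega> \<in> space M. fst \<omega> \<in> UNIV \<and> fst (snd \<omega>) = s \<and> snd (snd \<omega>)}"
      by auto
    ultimately show ?thesis unfolding cprob_def ce using regA[of UNIV s] regA[of "{x. g x s}" s] assms(9) ps[of s]
      by simp
  qed
  have intg: "integrable M (\<lambda>\<omega>. if fst (snd \<omega>) = s then h (fst \<omega>) else 0)"
    if hm: "h \<in> borel_measurable borel" and hb: "\<And>x. \<bar>h x\<bar> \<le> \<bar>\<eta> x s\<bar> + 1" for h s
  proof -
    have a: "integrable M (\<lambda>\<omega>. \<bar>\<eta> (fst \<omega>) (fst (snd \<omega>))\<bar> + 1)"
      using reg(2) by (intro Bochner_Integration.integrable_add integrable_abs) auto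
    have b: "(\<lambda>\<omega>. if fst (snd \<omega>) = s then h (fst \<omega>) else 0) \<in> borel_measurable M"
      by (rule m3[OF sM hm])
    have c: "AE \<omega> in M. norm (if fst (snd \<omega>) = s then h (fst \<omega>) else 0) \<le> norm (\<bar>\<eta> (fst \<omega>) (fst (snd \<omega>))\<bar> + 1)"
      using hb by (auto simp: abs_of_nonneg)
    show ?thesis by (rule Bochner_Integration.integrable_bound[OF a b c])
  qed
  have mg: "(\<lambda>x. f x * of_bool (g x s)) \<in> borel_measurable borel" if "f \<in> borel_measurable borel" for f :: "real^'d \<Rightarrow> real" and s
  proof -
    have "(\<lambda>x. f x * of_bool (g x s)) = (\<lambda>x. f x * indicator {x. g x s} x)"
      by (auto simp: fun_eq_iff indicator_def)
    have "(\<lambda>x. f x * indicator {x. g x s} x) \<in> borel_measurable borel" using that assms(9) by (intro Borel_Space.borel_measurable_times Borel_Space.borel_measurable_indicator) auto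
    then show ?thesis using \<open>(\<lambda>x. f x * of_bool (g x s)) = _\<close> by simp
  qed
  have hb: "0 \<le> \<eta>h x s" "\<eta>h x s \<le> 1" for x s using assms(8) by auto
  have i1: "integrable M (\<lambda>\<omega>. if fst (snd \<omega>) = s then \<eta> (fst \<omega>) s * of_bool (g (fst \<omega>) s) else 0)" for s
    using intg[of "\<lambda>x. \<eta> x s * of_bool (g x s)" s] mg reg(1) by auto
  have i2: "integrable M (\<lambda>\<omega>. if fst (snd \<omega>) = s then \<eta>h (fst \<omega>) s * of_bool (g (fst \<omega>) s) else 0)" for s
    using intg[of "\<lambda>x. \<eta>h x s * of_bool (g x s)" s] mg assms(7) hb by (auto simp: abs_of_nonneg add_increasing)
  have i3: "integrable M (\<lambda>\<omega>. if fst (snd \<omega>) = s then \<eta> (fst \<omega>) s else 0)" for s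
    using intg[of "\<lambda>x. \<eta> x s" s] reg(1) by auto
  have i4: "integrable M (\<lambda>\<omega>. if fst (snd \<omega>) = s then \<eta>h (fst \<omega>) s else 0)" for s
    using intg[of "\<lambda>x. \<eta>h x s" s] assms(7) hb by (auto simp: abs_of_nonneg add_increasing)
  have i5: "integrable M (\<lambda>\<omega>. if fst (snd \<omega>) = s then \<bar>\<eta> (fst \<omega>) s - \<eta>h (fst \<omega>) s\<bar> else 0)" for s
  proof -
    have m: "(\<lambda>x. \<bar>\<eta> x s - \<eta>h x s\<bar>) \<in> borel_measurable borel" using reg(1) assms(7) by (intro borel_measurable_abs borel_measurable_diff) auto
    have "\<bar>\<eta> x s - \<eta>h x s\<bar> \<le> \<bar>\<eta> x s\<bar> + 1" for x using hb[of x s] by auto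
    then show ?thesis using intg[OF m] by auto
  qed
  have bA: "\<bar>cond_exp_S M s (\<lambda>x. \<eta> x s * of_bool (g x s)) - cond_exp_S M s (\<lambda>x. \<eta>h x s * of_bool (g x s))\<bar>
      \<le> cond_exp_S M s (\<lambda>x. \<bar>\<eta> x s - \<eta>h x s\<bar>)" for s
  proof -
    have "I s (\<lambda>x. \<eta> x s * of_bool (g x s)) - I s (\<lambda>x. \<eta>h x s * of_bool (g x s))
       = (\<integral>\<omega>. (if fst (snd \<omega>) = s then \<eta> (fst \<omega>) s * of_bool (g (fst \<omega>) s) else 0)
              - (if fst (snd \<omega>) = s then \<eta>h (fst \<omega>) s * of_bool (g (fst \<omega>) s) else 0) \<partial>M)"
      unfolding I_def using i1 i2 by simp
    also have "\<bar>\<dots>\<bar> \<le> I s (\<lambda>x. \<bar>\<eta> x s - \<eta>h x s\<bar>)"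
      unfolding I_def
      by (rule absb) (use i1 i2 i5 in \<open>auto simp: abs_mult\<close>)
    finally show ?thesis unfolding ce using ps[of s]
      by (simp add: diff_divide_distrib[symmetric] divide_right_mono)
  qed
  have bE: "\<bar>cond_exp_S M s (\<lambda>x. \<eta> x s) - cond_exp_S M s (\<lambda>x. \<eta>h x s)\<bar>
      \<le> cond_exp_S M s (\<lambda>x. \<bar>\<eta> x s - \<eta>h x s\<bar>)" for s
  proof -
    have "I s (\<lambda>x. \<eta> x s) - I s (\<lambda>x. \<eta>h x s)
       = (\<integral>\<omega>. (if fst (snd \<omega>) = s then \<eta> (fst \<omega>) s else 0)
              - (if fst (snd \<omega>) = s then \<eta>h (fst \<omega>) s else 0) \<partial>M)"
      unfolding I_def using i3 i4 by simp
    also have "\<bar>\<dots>\<bar> \<le> I s (\<lambda>x. \<bar>\<eta> x s - \<eta>h x s\<bar>)"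
      unfolding I_def
      by (rule absb) (use i3 i4 i5 in \<open>auto\<close>)
    finally show ?thesis unfolding ce using ps[of s]
      by (simp add: diff_divide_distrib[symmetric] divide_right_mono)
  qed
  have bB: "0 \<le> cond_exp_S M s (\<lambda>x. \<eta>h x s * of_bool (g x s))"
     "cond_exp_S M s (\<lambda>x. \<eta>h x s * of_bool (g x s)) \<le> cond_exp_S M s (\<lambda>x. \<eta>h x s)" for s
  proof -
    show "0 \<le> cond_exp_S M s (\<lambda>x. \<eta>h x s * of_bool (g x s))"
      unfolding ce I_def using ps[of s] hb
      by (intro divide_nonneg_pos Bochner_Integration.integral_nonneg) auto
    have "I s (\<lambda>x. \<eta>h x s * of_bool (g x s)) \<le> I s (\<lambda>x. \<eta>h x s)"
      unfolding I_def using i2 i4 hb by (intro integral_mono) auto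
    then show "cond_exp_S M s (\<lambda>x. \<eta>h x s * of_bool (g x s)) \<le> cond_exp_S M s (\<lambda>x. \<eta>h x s)"
      unfolding ce using ps[of s] by (simp add: divide_right_mono)
  qed
  define a where "a s = cond_exp_S M s (\<lambda>x. \<eta> x s * of_bool (g x s)) / cond_exp_S M s (\<lambda>x. \<eta> x s)" for s
  define ah where "ah s = emp_exp DN s (\<lambda>x. \<eta>h x s * of_bool (g x s)) / emp_exp DN s (\<lambda>x. \<eta>h x s)" for s
  define T where "T s = 2 * cond_exp_S M s (\<lambda>x. \<bar>\<eta> x s - \<eta>h x s\<bar>)
          / cprob M (\<lambda>\<omega>. snd (snd \<omega>)) (\<lambda>\<omega>. fst (snd \<omega>) = s)
      + \<bar>cond_exp_S M s (\<lambda>x. \<eta>h x s * of_bool (g x s))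
          - emp_exp DN s (\<lambda>x. \<eta>h x s * of_bool (g x s))\<bar>
          / cond_exp_S M s (\<lambda>x. \<eta>h x s)
      + \<bar>emp_exp DN s (\<lambda>x. \<eta>h x s) - cond_exp_S M s (\<lambda>x. \<eta>h x s)\<bar>
          / cond_exp_S M s (\<lambda>x. \<eta>h x s)" for s
  have key: "\<bar>a s - ah s\<bar> \<le> T s" for s
    unfolding a_def ah_def T_def pi
    by (rule alg) (use assms(5) pi bA bE bB emp_bounds[OF assms(8)] assms(11) assms(12) in \<open>auto simp: abs_minus_commute\<close>)
  have u: "unfairness M g = \<bar>a True - a False\<bar>"
    unfolding unfairness_def a_def using cg[of True] cg[of False] by simp
  have eu: "emp_unfairness DN \<eta>h g = \<bar>ah True - ah False\<bar>"
    unfolding emp_unfairness_def ah_def by simp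
  have "\<bar>a True - a False\<bar> \<le> \<bar>ah True - ah False\<bar> + (T True + T False)"
    using key[of True] key[of False] by linarith
  then show ?thesis unfolding u eu T_def[symmetric] by (simp add: UNIV_bool)
qed
end
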